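(* For every positive integer $n$, \[ Z(n)=1+\frac{\left(1+(-1)^{n-1}\right)(n-1)!}{n+1}, \] where $Z(n)=\sum_{k=0}^{n-1}\frac{1+(-1)^{k}k!(n-k-1)!}{n}$. In particular $Z(2m)=1$ and $Z(2m-1)=1+\frac{(2m-2)!}{m}$ for all positive integers $m$, and $Z(n)\in\mathbb{N}$ for all $n\in\mathbb{N}$. *)

theory Defs
  imports Complex_Main
begin

definition Z :: "nat \<Rightarrow> real" where
  "Z n = (\<Sum>k<n. (1 + (-1) ^ k * fact k * fact (n - k - 1)) / real n)"

end

theory Submission
  imports Defs
begin

lemma tele: "(\<Sum>k<m. (-1::real)^k * (a k + a (Suc k))) = a 0 - (-1)^m * a m"
  by (induction m) (auto simp: algebra_simps)

lemma key: "real (N+2) * fact k * fact (N - k) = fact k * fact (N + 1 - k) + fact (Suc k) * fact (N - k)"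
  if "k \<le> N" for N k :: nat
proof -
  have e: "N + 1 - k = Suc (N - k)" using that by simp
  have h1: "fact (N + 1 - k) = (real N - real k + 1) * (fact (N - k) :: real)"
    unfolding e fact_Suc using that by (simp add: of_nat_diff)
  have h2: "fact (Suc k) = (real k + 1) * (fact k :: real)" by simp
  show ?thesis by (simp only: h1 h2) (simp add: algebra_simps)
qed

lemma S: "real (N+2) * (\<Sum>k<Suc N. (-1::real)^k * fact k * fact (N - k))
          = (1 + (-1)^N) * fact (N+1)"
proof -
  define a where "a k = (fact k * fact (N + 1 - k) :: real)" for k
  have "real (N+2) * (\<Sum>k<Suc N. (-1::real)^k * fact k * fact (N - k))
      = (\<Sum>k<Suc N. (-1::real)^k * (a k + a (Suc k)))"
    unfolding sum_distrib_left
  proof (rule sum.cong[OF refl])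
    fix k assume "k \<in> {..<Suc N}"
    then have "k \<le> N" by simp
    from key[OF this] have "(-1::real)^k * (real (N+2) * fact k * fact (N - k)) = (-1::real)^k * (a k + a (Suc k))"
      unfolding a_def by (simp only: diff_Suc_Suc add_Suc_right add_0_right Nat.add_0_right[of N] Suc_eq_plus1[symmetric] diff_Suc_Suc)
    then show "real (N+2) * ((-1::real)^k * fact k * fact (N - k)) = (-1::real)^k * (a k + a (Suc k))"
      by (simp only: mult_ac)
  qed
  also have "\<dots> = a 0 - (-1)^(Suc N) * a (Suc N)" by (rule tele)
  also have "\<dots> = (1 + (-1)^N) * fact (N+1)" by (simp add: a_def algebra_simps)
  finally show ?thesis .
qed

lemma part1: "n \<ge> 1 \<Longrightarrow> Z n = 1 + (1 + (-1) ^ (n - 1)) * fact (n - 1) / real (n + 1)"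
proof -
  assume "n \<ge> 1"
  then obtain N where n: "n = Suc N" by (cases n) auto
  have "Z n = (\<Sum>k<n. 1 / real n) + (\<Sum>k<n. (-1) ^ k * fact k * fact (n - k - 1) / real n)"
    unfolding Z_def sum.distrib[symmetric] by (simp add: add_divide_distrib)
  also have "(\<Sum>k<n. 1 / real n) = 1" using n by simp
  also have "(\<Sum>k<n. (-1) ^ k * fact k * fact (n - k - 1) / real n)
     = (\<Sum>k<Suc N. (-1::real)^k * fact k * fact (N - k)) / real (N+1)"
    unfolding n sum_divide_distrib by simp
  also have "(\<Sum>k<Suc N. (-1::real)^k * fact k * fact (N - k)) = (1 + (-1)^N) * fact (N+1) / real (N+2)"
    using S[of N] by (simp add: field_simps del: of_nat_Suc of_nat_add)
  also have "(1 + (-1)^N) * fact (N+1) / real (N+2) / real (N+1) = (1 + (-1::real)^N) * fact N / real (N+2)"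
    by (simp add: field_simps del: of_nat_Suc of_nat_add)
  finally show ?thesis using n by simp
qed

lemma P2: "Z (2 * m) = 1 \<and> Z (2 * m - 1) = 1 + fact (2 * m - 2) / real m" if "m \<ge> 1" for m :: nat
proof
  have "odd (2*m - 1)" using that by presburger
  then have "(-1::real)^(2*m-1) = -1" by simp
  then show "Z (2 * m) = 1" using part1[of "2*m"] that by simp
  have "even (2*m - 2)" by presburger
  then have "(-1::real)^(2*m-2) = 1" by simp
  moreover have "2*m-1-1 = 2*m-2" "2*m-1+1 = 2*m" using that by auto
  ultimately have "Z (2 * m - 1) = 1 + 2 * fact (2 * m - 2) / real (2*m)"
    using part1[of "2*m-1"] that by simp
  then show "Z (2 * m - 1) = 1 + fact (2 * m - 2) / real m" by simp
qed

lemma P3: "Z n \<in> \<nat>" for n :: nat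
proof (cases "n = 0")
  case True then show ?thesis by (simp add: Z_def)
next
  case False
  show ?thesis
  proof (cases "even n")
    case True
    then obtain m where "n = 2*m" by blast
    then show ?thesis using P2[of m] False by simp
  next
    case odd: False
    obtain k where k: "n = 2*k + 1" using odd oddE by blast
    define m where "m = k + 1"
    have nm: "n = 2*m - 1" "m \<ge> 1" using k m_def by auto
    have "m dvd fact (2*m-2)"
    proof (cases "m = 1")
      case True then show ?thesis by simp
    next
      case False then show ?thesis using nm by (intro dvd_fact) auto
    qed
    then obtain q where q: "fact (2*m-2) = m * q" by blast
    from q have "(fact (2*m-2)::real) = real m * real q" by (metis of_nat_fact of_nat_mult)
    then have "fact (2*m-2) / real m = real q" using nm(2) by simp
    then have "Z n = real (1 + q)" using P2[OF nm(2)] nm(1) by simp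
    then show ?thesis by (simp add: of_nat_in_Nats)
  qed
qed

theorem mainTheorem4:
  shows "(\<forall>n::nat. n \<ge> 1 \<longrightarrow>
            Z n = 1 + (1 + (-1) ^ (n - 1)) * fact (n - 1) / real (n + 1))
       \<and> (\<forall>m::nat. m \<ge> 1 \<longrightarrow>
            Z (2 * m) = 1 \<and> Z (2 * m - 1) = 1 + fact (2 * m - 2) / real m)
       \<and> (\<forall>n::nat. Z n \<in> \<nat>)"
  using part1 P2 P3 by blast

end
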